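(* Consider a rule of the PJR-Exact family run on $(\mathcal{A},k)$, and fix $j$ with $1\le j\le k$ such that iterations $1,\dots,j$ are all normal. Then for every candidate $c\in C\setminus W_j$ with $\ell_j(c)\ge1$, $$\sum_{i\in N:\ c\in A_i,\ |A_i\cap W_j|<\ell_j(c)}\left(f_i^j-\frac{\ell_j(c)-|A_i\cap W_j|-1}{\ell_j(c)}\right)\ \ge\ q.$$
   Context: Setting: voters $N=\{1,\dots,n\}$, candidates $C=\{c_1,\dots,c_m\}$, approval ballots $A_i\subseteq C$, $\mathcal{A}=(A_1,\dots,A_n)$, $k$ a positive integer with $k\le|C|$, $q=n/k$, $N_c=\{i: c\in A_i\}$. Convention: $\max\emptyset=0$. Dissatisfaction level: for $W\subseteq C$ with $|W|\le k$ and $c\in C\setminus W$, $\ell(c,W)$ is the largest nonnegative integer $\ell$ with $\ell=\lfloor \frac{k}{n}|\{i\in N: c\in A_i,\ |A_i\cap W|<\ell\}|\rfloor$. PJR-Exact family: iterative procedures selecting $w_1,\dots,w_k$, $W_0=\emptyset$, $W_j=W_{j-1}\cup\{w_j\}$, $w_j\notin W_{j-1}$, with vote fractions $f_i^0=1$, $0\le f_i^j\le f_i^{j-1}$, such that at each iteration $j$: (a) $f_i^j=f_i^{j-1}$ for $i\notin N_{w_j}$; (b) with $s=\sum_{i\in N_{w_j}}f_i^{j-1}$, if $s>q$ then $\sum_{i\in N_{w_j}}(f_i^{j-1}-f_i^j)=q$, and if $s\le q$ then $f_i^j=0$ for all $i\in N_{w_j}$; (c) if some $c\in C\setminus W_{j-1}$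 has $\sum_{i\in N_c}f_i^{j-1}\ge q$ then $\sum_{i\in N_{w_j}}f_i^{j-1}\ge q$. Notation along a run: $\ell_j(c)=\ell(c,W_j)$ for $c\in C\setminus W_j$; for $c\in C\setminus W_j$ and $i\in N_c$, $\ell_j(i,c)=\max_{c'\in A_i\setminus(W_j\cup\{c\})}\ell_j(c')$; $g_i^j(c)=0$ if $\ell_j(i,c)\le|A_i\cap W_j|$ and $g_i^j(c)=\frac{\ell_j(i,c)-|A_i\cap W_j|-1}{\ell_j(i,c)}$ otherwise. Normal state: $c\in C\setminus W_j$ is in normal state after $j$ iterations if (1) for each $i\in N_c$ with $\ell_j(i,c)>|A_i\cap W_j|$ we have $f_i^j\ge\frac{\ell_j(i,c)-|A_i\cap W_j|}{\ell_j(i,c)}$, and (2) $\sum_{i\in N_c}(f_i^j-g_i^j(c))\ge q$. Normal iteration: iteration $j$ ($1\le j\le k$) is normal if $w_j$ is in normal state after $j-1$ iterations and, for each $i\in N_{w_j}$ with $\ell_{j-1}(i,w_j)>|A_i\cap W_{j-1}|$, $f_i^j\ge\frac{\ell_{j-1}(i,w_j)-|A_i\cap W_j|}{\ell_{j-1}(i,w_j)}$. *)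

theory Defs
  imports Main Complex_Main
begin

text \<open>A run is given by the chosen candidates w 1, ..., w k and vote fractions f j i
  (fraction of voter i after j iterations).\<close>

definition voters :: "nat \<Rightarrow> nat set" where
  "voters n = {1..n}"

definition supporters :: "nat \<Rightarrow> (nat \<Rightarrow> 'c set) \<Rightarrow> 'c \<Rightarrow> nat set" where
  "supporters n A c = {i \<in> voters n. c \<in> A i}"

definition quota :: "nat \<Rightarrow> nat \<Rightarrow> real" where
  "quota n k = real n / real k"

definition dlevel :: "nat \<Rightarrow> nat \<Rightarrow> (nat \<Rightarrow> 'c set) \<Rightarrow> 'c set \<Rightarrow> 'c \<Rightarrow> nat" where
  "dlevel n k A W c = (GREATEST l::nat. int l =
      \<lfloor>real k / real n * real (card {i \<in> voters n. c \<in> A i \<and> card (A i \<inter> W) < l})\<rfloor>)"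

definition vlevel :: "nat \<Rightarrow> nat \<Rightarrow> (nat \<Rightarrow> 'c set) \<Rightarrow> 'c set \<Rightarrow> nat \<Rightarrow> 'c \<Rightarrow> nat" where
  "vlevel n k A W i c =
     (if A i - (W \<union> {c}) = {} then 0 else Max (dlevel n k A W ` (A i - (W \<union> {c}))))"

definition gfun :: "nat \<Rightarrow> nat \<Rightarrow> (nat \<Rightarrow> 'c set) \<Rightarrow> 'c set \<Rightarrow> nat \<Rightarrow> 'c \<Rightarrow> real" where
  "gfun n k A W i c =
     (if vlevel n k A W i c \<le> card (A i \<inter> W) then 0
      else (real (vlevel n k A W i c) - real (card (A i \<inter> W)) - 1) / real (vlevel n k A W i c))"

definition Wset :: "(nat \<Rightarrow> 'c) \<Rightarrow> nat \<Rightarrow> 'c set" where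
  "Wset w j = w ` {1..j}"

definition PJR_exact_run ::
  "nat \<Rightarrow> nat \<Rightarrow> 'c set \<Rightarrow> (nat \<Rightarrow> 'c set) \<Rightarrow> (nat \<Rightarrow> 'c) \<Rightarrow> (nat \<Rightarrow> nat \<Rightarrow> real) \<Rightarrow> bool" where
  "PJR_exact_run n k C A w f \<longleftrightarrow>
     (\<forall>i \<in> voters n. f 0 i = 1) \<and>
     (\<forall>j \<in> {1..k}.
        w j \<in> C \<and> w j \<notin> Wset w (j - 1) \<and>
        (\<forall>i \<in> voters n. 0 \<le> f j i \<and> f j i \<le> f (j - 1) i) \<and>
        (\<forall>i \<in> voters n. i \<notin> supporters n A (w j) \<longrightarrow> f j i = f (j - 1) i) \<and>
        ((\<Sum>i \<in> supporters n A (w j). f (j - 1) i) > quota n k \<longrightarrow>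
           (\<Sum>i \<in> supporters n A (w j). f (j - 1) i - f j i) = quota n k) \<and>
        ((\<Sum>i \<in> supporters n A (w j). f (j - 1) i) \<le> quota n k \<longrightarrow>
           (\<forall>i \<in> supporters n A (w j). f j i = 0)) \<and>
        ((\<exists>c \<in> C - Wset w (j - 1). (\<Sum>i \<in> supporters n A c. f (j - 1) i) \<ge> quota n k) \<longrightarrow>
           (\<Sum>i \<in> supporters n A (w j). f (j - 1) i) \<ge> quota n k))"

definition normal_state ::
  "nat \<Rightarrow> nat \<Rightarrow> (nat \<Rightarrow> 'c set) \<Rightarrow> 'c set \<Rightarrow> (nat \<Rightarrow> real) \<Rightarrow> 'c \<Rightarrow> bool" where
  "normal_state n k A W fj c \<longleftrightarrow>
     (\<forall>i \<in> supporters n A c. vlevel n k A W i c > card (A i \<inter> W) \<longrightarrow>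
        fj i \<ge> (real (vlevel n k A W i c) - real (card (A i \<inter> W))) / real (vlevel n k A W i c)) \<and>
     (\<Sum>i \<in> supporters n A c. fj i - gfun n k A W i c) \<ge> quota n k"

definition normal_iteration ::
  "nat \<Rightarrow> nat \<Rightarrow> (nat \<Rightarrow> 'c set) \<Rightarrow> (nat \<Rightarrow> 'c) \<Rightarrow> (nat \<Rightarrow> nat \<Rightarrow> real) \<Rightarrow> nat \<Rightarrow> bool" where
  "normal_iteration n k A w f j \<longleftrightarrow>
     normal_state n k A (Wset w (j - 1)) (f (j - 1)) (w j) \<and>
     (\<forall>i \<in> supporters n A (w j).
        vlevel n k A (Wset w (j - 1)) i (w j) > card (A i \<inter> Wset w (j - 1)) \<longrightarrow>
        f j i \<ge> (real (vlevel n k A (Wset w (j - 1)) i (w j)) - real (card (A i \<inter> Wset w j)))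
                 / real (vlevel n k A (Wset w (j - 1)) i (w j)))"

end

theory Submission
  imports Defs
begin

lemma hbound:
  assumes "n \<ge> 1"
  shows "\<lfloor>real k / real n * real (card {i \<in> voters n. P i})\<rfloor> \<le> int k"
proof -
  have "card {i \<in> voters n. P i} \<le> card (voters n)"
    by (rule card_mono) (auto simp: voters_def)
  hence c: "real (card {i \<in> voters n. P i}) \<le> real n" by (simp add: voters_def)
  have "real k / real n * real (card {i \<in> voters n. P i}) \<le> real k / real n * real n"
    by (rule mult_left_mono[OF c]) simp
  also have "\<dots> = real k" using assms by simp
  finally show ?thesis by (metis floor_mono floor_of_nat)
qed

lemma dlevel_eq:
  assumes "n \<ge> 1"
  shows "int (dlevel n k A W c) =
    \<lfloor>real k / real n * real (card {i \<in> voters n. c \<in> A i \<and> card (A i \<inter> W) < dlevel n k A W c})\<rfloor>"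
  unfolding dlevel_def
proof (rule GreatestI_nat[where k=0 and b=k])
  show "int 0 = \<lfloor>real k / real n * real (card {i \<in> voters n. c \<in> A i \<and> card (A i \<inter> W) < 0})\<rfloor>"
    by simp
  show "y \<le> k" if "int y = \<lfloor>real k / real n * real (card {i \<in> voters n. c \<in> A i \<and> card (A i \<inter> W) < y})\<rfloor>" for y
    using hbound[OF assms] that by (metis of_nat_le_iff)
qed

lemma dlevel_mono:
  assumes n: "n \<ge> 1" and fin: "\<forall>i \<in> voters n. finite (A i)" and sub: "W \<subseteq> W'"
  shows "dlevel n k A W' c \<le> dlevel n k A W c"
proof -
  define h where "h l = \<lfloor>real k / real n * real (card {i \<in> voters n. c \<in> A i \<and> card (A i \<inter> W) < l})\<rfloor>" for l
  define h' where "h' l = \<lfloor>real k / real n * real (card {i \<in> voters n. c \<in> A i \<and> card (A i \<inter> W') < l})\<rfloor>" for l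
  have fv: "finite (voters n)" by (simp add: voters_def)
  have hmono: "h l1 \<le> h l2" if "l1 \<le> l2" for l1 l2
  proof -
    have "card {i \<in> voters n. c \<in> A i \<and> card (A i \<inter> W) < l1} \<le> card {i \<in> voters n. c \<in> A i \<and> card (A i \<inter> W) < l2}"
      by (rule card_mono) (use fv that in auto)
    thus ?thesis unfolding h_def by (intro floor_mono mult_left_mono) auto
  qed
  have hh': "h' l \<le> h l" for l
  proof -
    have "card {i \<in> voters n. c \<in> A i \<and> card (A i \<inter> W') < l} \<le> card {i \<in> voters n. c \<in> A i \<and> card (A i \<inter> W) < l}"
    proof (rule card_mono)
      show "finite {i \<in> voters n. c \<in> A i \<and> card (A i \<inter> W) < l}" using fv by auto
      show "{i \<in> voters n. c \<in> A i \<and> card (A i \<inter> W') < l} \<subseteq> {i \<in> voters n. c \<in> A i \<and> card (A i \<inter> W) < l}"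
      proof
        fix i assume "i \<in> {i \<in> voters n. c \<in> A i \<and> card (A i \<inter> W') < l}"
        moreover have "card (A i \<inter> W) \<le> card (A i \<inter> W')" if "i \<in> voters n"
          using fin that sub by (intro card_mono) auto
        ultimately show "i \<in> {i \<in> voters n. c \<in> A i \<and> card (A i \<inter> W) < l}" by auto
      qed
    qed
    thus ?thesis unfolding h_def h'_def by (intro floor_mono mult_left_mono) auto
  qed
  have hb: "h l \<le> int k" for l unfolding h_def by (rule hbound[OF n])
  define l' where "l' = dlevel n k A W' c"
  have l'eq: "int l' = h' l'" unfolding l'_def h'_def by (rule dlevel_eq[OF n])
  have P_bound: "\<And>y. int y \<le> h y \<Longrightarrow> y \<le> k" using hb by (metis order_trans of_nat_le_iff)
  define m where "m = (GREATEST l. int l \<le> h l)"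
  have l'P: "int l' \<le> h l'" using l'eq hh'[of l'] by simp
  have mP: "int m \<le> h m" unfolding m_def by (rule GreatestI_nat[where P="\<lambda>l. int l \<le> h l", OF l'P P_bound])
  have l'm: "l' \<le> m" unfolding m_def by (rule Greatest_le_nat[where P="\<lambda>l. int l \<le> h l", OF l'P P_bound])
  define m2 where "m2 = nat (h m)"
  have m2eq: "int m2 = h m" unfolding m2_def using mP by simp
  have "m \<le> m2" using mP m2eq by simp
  hence "h m \<le> h m2" by (rule hmono)
  hence "int m2 \<le> h m2" using m2eq by simp
  hence "m2 \<le> m" unfolding m_def by (rule Greatest_le_nat[where P="\<lambda>l. int l \<le> h l", OF _ P_bound])
  hence hm: "int m = h m" using m2eq \<open>m \<le> m2\<close> by simp
  have Pb2: "\<And>y. int y = \<lfloor>real k / real n * real (card {i \<in> voters n. c \<in> A i \<and> card (A i \<inter> W) < y})\<rfloor> \<Longrightarrow> y \<le> k"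
    using hbound[OF n] by (metis of_nat_le_iff)
  have "m \<le> dlevel n k A W c" unfolding dlevel_def
    by (rule Greatest_le_nat[OF _ Pb2]) (use hm in \<open>simp add: h_def\<close>)
  with l'm show ?thesis unfolding l'_def by simp
qed

lemma unchanged:
  assumes run: "PJR_exact_run n k C A w f" and i: "i \<in> voters n"
  shows "t \<le> j \<Longrightarrow> j \<le> k \<Longrightarrow> (\<forall>s \<in> {t<..j}. w s \<notin> A i) \<Longrightarrow> f j i = f t i"
proof (induction j)
  case 0 thus ?case by simp
next
  case (Suc j)
  show ?case
  proof (cases "t = Suc j")
    case True thus ?thesis by simp
  next
    case False
    hence tj: "t \<le> j" using Suc.prems by simp
    have "Suc j \<in> {1..k}" using Suc.prems by simp
    moreover have "i \<notin> supporters n A (w (Suc j))"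
      using Suc.prems(3) tj by (auto simp: supporters_def)
    ultimately have "f (Suc j) i = f j i" using run i unfolding PJR_exact_run_def by fastforce
    also have "\<dots> = f t i" using Suc.IH tj Suc.prems by auto
    finally show ?thesis .
  qed
qed

theorem mainTheorem5:
  fixes n k j :: nat and C :: "'c set" and A :: "nat \<Rightarrow> 'c set"
    and w :: "nat \<Rightarrow> 'c" and f :: "nat \<Rightarrow> nat \<Rightarrow> real" and c :: 'c
  assumes "n \<ge> 1" and "finite C" and "\<forall>i \<in> voters n. A i \<subseteq> C"
    and "0 < k" and "k \<le> card C"
    and "PJR_exact_run n k C A w f"
    and "1 \<le> j" and "j \<le> k"
    and "\<forall>t \<in> {1..j}. normal_iteration n k A w f t"
    and "c \<in> C - Wset w j"
    and "dlevel n k A (Wset w j) c \<ge> 1"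
  shows "(\<Sum>i \<in> {i \<in> voters n. c \<in> A i \<and> card (A i \<inter> Wset w j) < dlevel n k A (Wset w j) c}.
            f j i - (real (dlevel n k A (Wset w j) c) - real (card (A i \<inter> Wset w j)) - 1)
                    / real (dlevel n k A (Wset w j) c)) \<ge> quota n k"
proof -
  note n = assms(1) and run = assms(6) and jk = assms(8) and norm = assms(9) and cW = assms(10)
  define W where "W = Wset w j"
  define l where "l = dlevel n k A W c"
  define S where "S = {i \<in> voters n. c \<in> A i \<and> card (A i \<inter> W) < l}"
  have fin: "\<forall>i \<in> voters n. finite (A i)" using assms(2,3) finite_subset by blast
  have lpos: "real l > 0" using assms(11) unfolding l_def W_def by simp
  have key: "f j i \<ge> (real l - real (card (A i \<inter> W))) / real l" if iS: "i \<in> S" for i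
  proof -
    have iv: "i \<in> voters n" and ciA: "c \<in> A i" and al: "card (A i \<inter> W) < l" using iS S_def by auto
    define a where "a = card (A i \<inter> W)"
    define T where "T = {s \<in> {1..j}. w s \<in> A i}"
    show ?thesis
    proof (cases "T = {}")
      case True
      have "\<forall>s \<in> {0<..j}. w s \<notin> A i" using True T_def by auto
      hence "f j i = f 0 i" using unchanged[OF run iv, of 0 j] jk by simp
      also have "\<dots> = 1" using run iv unfolding PJR_exact_run_def by simp
      finally show ?thesis using lpos by (simp add: divide_simps)
    next
      case False
      define t where "t = Max T"
      have finT: "finite T" unfolding T_def by simp
      have tT: "t \<in> T" unfolding t_def using Max_in[OF finT False] .
      hence t1: "1 \<le> t" and tj: "t \<le> j" and wt: "w t \<in> A i" unfolding T_def by auto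
      have after: "\<forall>s \<in> {t<..j}. w s \<notin> A i"
      proof (intro ballI notI)
        fix s assume "s \<in> {t<..j}" "w s \<in> A i"
        hence "s \<in> T" unfolding T_def by auto
        hence "s \<le> t" unfolding t_def using Max_ge[OF finT] by simp
        with \<open>s \<in> {t<..j}\<close> show False by simp
      qed
      have fj: "f j i = f t i" using unchanged[OF run iv tj jk after] .
      have AW: "A i \<inter> W = A i \<inter> Wset w t"
      proof
        show "A i \<inter> W \<subseteq> A i \<inter> Wset w t"
        proof
          fix x assume "x \<in> A i \<inter> W"
          then obtain s where s: "s \<in> {1..j}" "x = w s" "w s \<in> A i" unfolding W_def Wset_def by auto
          hence "s \<le> t" using after by force
          thus "x \<in> A i \<inter> Wset w t" using s unfolding Wset_def by auto
        qed
        show "A i \<inter> Wset w t \<subseteq> A i \<inter> W" using tj unfolding W_def Wset_def by auto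
      qed
      have tmem: "t \<in> {1..j}" using t1 tj by simp
      have ni: "normal_iteration n k A w f t" using norm tmem by blast
      have isup: "i \<in> supporters n A (w t)" using iv wt by (simp add: supporters_def)
      define L where "L = vlevel n k A (Wset w (t - 1)) i (w t)"
      have sub1: "Wset w (t - 1) \<subseteq> W" unfolding W_def Wset_def using tj by auto
      have wtW: "w t \<in> W" unfolding W_def Wset_def using tmem by auto
      have cin: "c \<in> A i - (Wset w (t - 1) \<union> {w t})" using ciA cW sub1 wtW unfolding W_def by auto
      have finD: "finite (A i - (Wset w (t - 1) \<union> {w t}))" using fin iv by auto
      have "dlevel n k A (Wset w (t - 1)) c \<le> L"
        unfolding L_def vlevel_def using cin finD by (auto intro!: Max_ge)
      moreover have "l \<le> dlevel n k A (Wset w (t - 1)) c"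
        unfolding l_def by (rule dlevel_mono[OF n fin sub1])
      ultimately have lL: "l \<le> L" by simp
      have "card (A i \<inter> Wset w (t - 1)) \<le> card (A i \<inter> Wset w t)"
        using fin iv by (intro card_mono) (auto simp: Wset_def)
      hence "card (A i \<inter> Wset w (t - 1)) < L" using AW al lL by simp
      hence ft: "f t i \<ge> (real L - real (card (A i \<inter> Wset w t))) / real L"
        using ni isup unfolding normal_iteration_def L_def by auto
      have aeq: "card (A i \<inter> Wset w t) = a" using AW a_def by simp
      have "(real l - real a) / real l \<le> (real L - real a) / real L"
      proof -
        have "real a * real l \<le> real a * real L" using lL by (intro mult_left_mono) auto
        moreover have "real L > 0" using lL lpos by simp
        ultimately show ?thesis using lpos by (simp add: divide_simps algebra_simps)
      qed
      thus ?thesis using ft fj aeq a_def by simp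
    qed
  qed
  have "(\<Sum>i \<in> S. f j i - (real l - real (card (A i \<inter> W)) - 1) / real l) \<ge> (\<Sum>i \<in> S. 1 / real l)"
  proof (rule sum_mono)
    fix i assume "i \<in> S"
    from key[OF this] have "f j i \<ge> (real l - real (card (A i \<inter> W))) / real l" .
    moreover have "(real l - real (card (A i \<inter> W))) / real l - (real l - real (card (A i \<inter> W)) - 1) / real l = 1 / real l"
      by (simp add: diff_divide_distrib)
    ultimately show "1 / real l \<le> f j i - (real l - real (card (A i \<inter> W)) - 1) / real l" by linarith
  qed
  moreover have "(\<Sum>i \<in> S. 1 / real l) = real (card S) / real l" by simp
  moreover have "real (card S) / real l \<ge> quota n k"
  proof -
    have "int l = \<lfloor>real k / real n * real (card S)\<rfloor>" unfolding l_def S_def by (rule dlevel_eq[OF n])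
    hence "real l \<le> real k / real n * real (card S)" by (metis floor_correct of_int_of_nat_eq of_int_le_iff le_floor_iff order_refl)
    hence "real l * real n \<le> real k * real (card S)" using n by (simp add: divide_simps)
    thus ?thesis unfolding quota_def using lpos n assms(4) by (simp add: divide_simps mult.commute)
  qed
  ultimately show ?thesis unfolding S_def l_def W_def by linarith
qed

end
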